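(* Let $\mathcal D=(C_1,C_2,C_3,C_4)$ be any ordered, oriented Descartes configuration and let $\mathbf D=\tfrac12\begin{pmatrix}-1&1&1&1\\1&-1&1&1\\1&1&-1&1\\1&1&1&-1\end{pmatrix}$. Then $\mathbf D\in\mathrm{Aut}(Q_D)$, and $\mathbf D\mathbf W_{\mathcal D}=\mathbf W_{\mathcal D^\perp}$ for an ordered, oriented Descartes configuration $\mathcal D^\perp=(C_1^\perp,\dots,C_4^\perp)$ in which, for each $i$, the circle $C_i^\perp$ is (as an unoriented circle or line) the circle through the three tangency points of $\mathcal D$ that do not lie on $C_i$. The configuration $\mathcal D^\perp$ has the same six tangency points as $\mathcal D$, and its circles meet those of $\mathcal D$ orthogonally at these points.
   Context: Oriented circles: radius $r$, oriented curvature $\pm1/r$, $+$ iff the interior is the bounded open disk; oriented lines have curvature $0$, unit normal $\mathbf h$, interior the open half-plane into which $\mathbf h$ points. A Descartes configuration: four mutually tangent circles/lines with six distinct tangency points (parallel lines tangent at $\infty$); oriented if the four interiors are pairwise disjoint or become so after reversing all orientations. Augmented curvature-center coordinates: for center $\mathbf c$ and oriented radius $r$, $\mathbf w(C)=((|\mathbf c|^2-r^2)/r,1/r,c_1/r,c_2/r)$; for the line $\mathbf x\cdot\mathbf h=m$ with interior-pointing unit normal $\mathbf h$, $\mathbf w(C)=(2m,0,h_1,h_2)$. $\mathbf W_{\mathcal D}$ has $k$-th row $\mathbf w(C_k)$. $\mathbf Q_D=\mathbf I-\frac12\mathbf 1\mathbf 1^T$ and $\mathrm{Aut}(Q_D)=\{\mathbf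 U:\mathbf U^T\mathbf Q_D\mathbf U=\mathbf Q_D\}$. *)

theory Defs
  imports "HOL-Analysis.Analysis"
begin

text \<open>OCirc c r : circle with centre c and oriented (signed) radius r; r > 0 iff the interior is
              the bounded open disk.
  OLine h m : the line x . h = m with interior-pointing unit normal h; interior is the open
              half-plane x . h > m.\<close>

datatype ocircle = OCirc complex real | OLine complex real

definition dotc :: "complex \<Rightarrow> complex \<Rightarrow> real" where
  "dotc x y = Re x * Re y + Im x * Im y"

fun valid_oc :: "ocircle \<Rightarrow> bool" where
  "valid_oc (OCirc c r) \<longleftrightarrow> r \<noteq> 0"
| "valid_oc (OLine h m) \<longleftrightarrow> cmod h = 1"

text \<open>Point set in the extended plane (None = the point at infinity, lying on every line).\<close>
fun ext_pts :: "ocircle \<Rightarrow> complex option set" where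
  "ext_pts (OCirc c r) = Some ` sphere c \<bar>r\<bar>"
| "ext_pts (OLine h m) = insert None (Some ` {x. dotc x h = m})"

fun interior_oc :: "ocircle \<Rightarrow> complex set" where
  "interior_oc (OCirc c r) = (if r > 0 then ball c r else {x. dist x c > \<bar>r\<bar>})"
| "interior_oc (OLine h m) = {x. dotc x h > m}"

fun reverse_oc :: "ocircle \<Rightarrow> ocircle" where
  "reverse_oc (OCirc c r) = OCirc c (- r)"
| "reverse_oc (OLine h m) = OLine (- h) (- m)"

text \<open>Tangency: exactly one common point in the extended plane (parallel lines are tangent at
  infinity; crossing lines meet twice, at a finite point and at infinity).\<close>
definition tangent_oc :: "ocircle \<Rightarrow> ocircle \<Rightarrow> bool" where
  "tangent_oc C D \<longleftrightarrow> (\<exists>!p. p \<in> ext_pts C \<inter> ext_pts D)"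

definition tangency_point :: "ocircle \<Rightarrow> ocircle \<Rightarrow> complex option" where
  "tangency_point C D = (THE p. p \<in> ext_pts C \<inter> ext_pts D)"

fun orthogonal_oc :: "ocircle \<Rightarrow> ocircle \<Rightarrow> bool" where
  "orthogonal_oc (OCirc c r) (OCirc d s) \<longleftrightarrow> (cmod (c - d))\<^sup>2 = r\<^sup>2 + s\<^sup>2"
| "orthogonal_oc (OCirc c r) (OLine h m) \<longleftrightarrow> dotc c h = m"
| "orthogonal_oc (OLine h m) (OCirc c r) \<longleftrightarrow> dotc c h = m"
| "orthogonal_oc (OLine h m) (OLine k n) \<longleftrightarrow> dotc h k = 0"

type_synonym config = "4 \<Rightarrow> ocircle"

definition descartes_config :: "config \<Rightarrow> bool" where
  "descartes_config C \<longleftrightarrow>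
     (\<forall>i. valid_oc (C i)) \<and>
     (\<forall>i j. i \<noteq> j \<longrightarrow> tangent_oc (C i) (C j)) \<and>
     (\<forall>i j k l. i \<noteq> j \<longrightarrow> k \<noteq> l \<longrightarrow>
        tangency_point (C i) (C j) = tangency_point (C k) (C l) \<longrightarrow> {i, j} = {k, l})"

definition oriented_descartes_config :: "config \<Rightarrow> bool" where
  "oriented_descartes_config C \<longleftrightarrow> descartes_config C \<and>
     ((\<forall>i j. i \<noteq> j \<longrightarrow> interior_oc (C i) \<inter> interior_oc (C j) = {}) \<or>
      (\<forall>i j. i \<noteq> j \<longrightarrow> interior_oc (reverse_oc (C i)) \<inter> interior_oc (reverse_oc (C j)) = {}))"

definition tangency_points :: "config \<Rightarrow> complex option set" where
  "tangency_points C = {tangency_point (C i) (C j) | i j. i \<noteq> j}"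

fun acc_coords :: "ocircle \<Rightarrow> real^4" where
  "acc_coords (OCirc c r) =
     vector [((cmod c)\<^sup>2 - r\<^sup>2) / r, 1 / r, Re c / r, Im c / r]"
| "acc_coords (OLine h m) = vector [2 * m, 0, Re h, Im h]"

definition W_mat :: "config \<Rightarrow> real^4^4" where
  "W_mat C = (\<chi> k. acc_coords (C k))"

definition Q_D :: "real^4^4" where
  "Q_D = (\<chi> i j. (if i = j then 1 else 0) - 1/2)"

definition Aut_QD :: "(real^4^4) set" where
  "Aut_QD = {U. transpose U ** Q_D ** U = Q_D}"

definition D_mat :: "real^4^4" where
  "D_mat = (\<chi> i j. if i = j then - 1/2 else 1/2)"

end

theory Submission
  imports Defs
begin


lemma vector_4 [simp]:
 "(vector [x,y,z,w] ::('a::zero)^4)$1 = x"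
 "(vector [x,y,z,w] ::('a::zero)^4)$2 = y"
 "(vector [x,y,z,w] ::('a::zero)^4)$3 = z"
 "(vector [x,y,z,w] ::('a::zero)^4)$4 = w"
  unfolding vector_def by simp_all

definition Lf :: "real^4 \<Rightarrow> real^4 \<Rightarrow> real" where
  "Lf x y = (x$1 * y$2 + x$2 * y$1)/2 - x$3*y$3 - x$4*y$4"

lemma Lf_add_left: "Lf (x + y) z = Lf x z + Lf y z"
  by (simp add: Lf_def field_simps)
lemma Lf_add_right: "Lf z (x + y) = Lf z x + Lf z y"
  by (simp add: Lf_def field_simps)
lemma Lf_diff_left: "Lf (x - y) z = Lf x z - Lf y z"
  by (simp add: Lf_def field_simps)
lemma Lf_diff_right: "Lf z (x - y) = Lf z x - Lf z y"
  by (simp add: Lf_def field_simps)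
lemma Lf_scale_left: "Lf (a *\<^sub>R x) z = a * Lf x z"
  by (simp add: Lf_def field_simps)
lemma Lf_scale_right: "Lf z (a *\<^sub>R x) = a * Lf z x"
  by (simp add: Lf_def field_simps)
lemma Lf_neg_left: "Lf (- x) z = - Lf x z"
  by (simp add: Lf_def field_simps)
lemma Lf_neg_right: "Lf z (- x) = - Lf z x"
  by (simp add: Lf_def field_simps)
lemma Lf_zero_left: "Lf 0 z = 0" and Lf_zero_right: "Lf z 0 = 0"
  by (simp_all add: Lf_def)
lemma Lf_sym: "Lf x y = Lf y x"
  by (simp add: Lf_def field_simps)

lemmas Lf_lin = Lf_add_left Lf_add_right Lf_diff_left Lf_diff_right Lf_scale_left
  Lf_scale_right Lf_neg_left Lf_neg_right Lf_zero_left Lf_zero_right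

lemma cmod_sq: "(cmod z)\<^sup>2 = (Re z)\<^sup>2 + (Im z)\<^sup>2"
  by (simp add: cmod_power2)

lemma acc_C [simp]:
  "acc_coords (OCirc c r) $ 1 = ((Re c)\<^sup>2 + (Im c)\<^sup>2 - r\<^sup>2) / r"
  "acc_coords (OCirc c r) $ 2 = 1 / r"
  "acc_coords (OCirc c r) $ 3 = Re c / r"
  "acc_coords (OCirc c r) $ 4 = Im c / r"
  by (simp_all add: cmod_sq)

lemma acc_L [simp]:
  "acc_coords (OLine h m) $ 1 = 2 * m"
  "acc_coords (OLine h m) $ 2 = 0"
  "acc_coords (OLine h m) $ 3 = Re h"
  "acc_coords (OLine h m) $ 4 = Im h"
  by simp_all


declare acc_coords.simps [simp del]

lemma Lf_self: "valid_oc A \<Longrightarrow> Lf (acc_coords A) (acc_coords A) = -1"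
proof (cases A)
  case (OCirc c r)
  assume "valid_oc A"
  then have r: "r \<noteq> 0" using OCirc by simp
  show ?thesis using r unfolding OCirc Lf_def
    by (simp add: field_simps power2_eq_square)
next
  case (OLine h m)
  assume "valid_oc A"
  then have "cmod h = 1" using OLine by simp
  then have "(Re h)\<^sup>2 + (Im h)\<^sup>2 = 1" by (metis cmod_sq power_one)
  then show ?thesis unfolding OLine Lf_def by (simp add: power2_eq_square)
qed

lemma acc_reverse: "acc_coords (reverse_oc A) = - acc_coords A"
  by (cases A) (simp_all add: vec_eq_iff forall_4 field_simps power2_eq_square)

lemma ext_pts_reverse: "ext_pts (reverse_oc A) = ext_pts A"
  by (cases A) (auto simp: dotc_def)

lemma valid_reverse: "valid_oc (reverse_oc A) = valid_oc A"
  by (cases A) auto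

fun nvec :: "complex option \<Rightarrow> real^4" where
  "nvec None = vector [1,0,0,0]"
| "nvec (Some p) = vector [(cmod p)\<^sup>2, 1, Re p, Im p]"

lemma nvec_comp [simp]:
  "nvec None $ 1 = 1" "nvec None $ 2 = 0" "nvec None $ 3 = 0" "nvec None $ 4 = 0"
  "nvec (Some p) $ 1 = (Re p)\<^sup>2 + (Im p)\<^sup>2" "nvec (Some p) $ 2 = 1"
  "nvec (Some p) $ 3 = Re p" "nvec (Some p) $ 4 = Im p"
  by (simp_all add: cmod_sq)

declare nvec.simps [simp del]

definition ptof :: "real^4 \<Rightarrow> complex option" where
  "ptof n = (if n$2 = 0 then None else Some (Complex (n$3/n$2) (n$4/n$2)))"

definition inv_acc :: "real^4 \<Rightarrow> ocircle" where
  "inv_acc v = (if v$2 = 0 then OLine (Complex (v$3) (v$4)) (v$1/2)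
                else OCirc (Complex (v$3/v$2) (v$4/v$2)) (1/v$2))"

definition fut :: "real^4 \<Rightarrow> bool" where
  "fut n \<longleftrightarrow> n$2 > 0 \<or> (n$2 = 0 \<and> n$1 > 0)"

lemma dist_sq: "(dist a b)\<^sup>2 = (Re a - Re b)\<^sup>2 + (Im a - Im b)\<^sup>2"
  by (simp add: dist_norm cmod_sq)

lemma incidence:
  assumes "valid_oc A"
  shows "P \<in> ext_pts A \<longleftrightarrow> Lf (acc_coords A) (nvec P) = 0"
proof (cases A)
  case (OCirc c r)
  then have r: "r \<noteq> 0" using assms by simp
  show ?thesis
  proof (cases P)
    case None
    then show ?thesis using r OCirc by (auto simp: Lf_def)
  next
    case (Some p)
    have eq: "Lf (acc_coords A) (nvec P) = ((dist c p)\<^sup>2 - r\<^sup>2)/(2*r)"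
      using r unfolding OCirc Some Lf_def dist_sq
      by (simp add: field_simps power2_eq_square)
    have "P \<in> ext_pts A \<longleftrightarrow> dist c p = \<bar>r\<bar>" using OCirc Some by auto
    also have "\<dots> \<longleftrightarrow> (dist c p)\<^sup>2 = r\<^sup>2"
      by (metis abs_of_nonneg power2_abs power2_eq_iff_nonneg abs_ge_zero zero_le_dist)
    also have "\<dots> \<longleftrightarrow> Lf (acc_coords A) (nvec P) = 0"
      using r unfolding eq by simp
    finally show ?thesis .
  qed
next
  case (OLine h m)
  show ?thesis
  proof (cases P)
    case None
    then show ?thesis using OLine by (auto simp: Lf_def)
  next
    case (Some p)
    then show ?thesis using OLine by (auto simp: Lf_def dotc_def algebra_simps)
  qed
qed

lemma Lf_CC:
  assumes "r1 \<noteq> 0" "r2 \<noteq> 0"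
  shows "Lf (acc_coords (OCirc c1 r1)) (acc_coords (OCirc c2 r2)) =
    ((cmod (c1 - c2))\<^sup>2 - r1\<^sup>2 - r2\<^sup>2) / (2*r1*r2)"
  using assms unfolding Lf_def cmod_sq by (simp add: field_simps power2_eq_square)

lemma Lf_CL:
  assumes "r \<noteq> 0"
  shows "Lf (acc_coords (OCirc c r)) (acc_coords (OLine h m)) = (m - dotc c h) / r"
  using assms unfolding Lf_def dotc_def by (simp add: field_simps power2_eq_square)

lemma Lf_LC:
  assumes "r \<noteq> 0"
  shows "Lf (acc_coords (OLine h m)) (acc_coords (OCirc c r)) = (m - dotc c h) / r"
  using Lf_CL[OF assms] Lf_sym by metis

lemma Lf_LL:
  shows "Lf (acc_coords (OLine h m)) (acc_coords (OLine k n)) = - dotc h k"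
  unfolding Lf_def dotc_def by simp

lemma vec4_nz: "(m::real^4) \<noteq> 0 \<longleftrightarrow> m$1 \<noteq> 0 \<or> m$2 \<noteq> 0 \<or> m$3 \<noteq> 0 \<or> m$4 \<noteq> 0"
  by (auto simp: vec_eq_iff forall_4)

lemma acc_inv_aux:
  fixes x y z w :: real
  assumes "y \<noteq> 0" "x * y = z\<^sup>2 + w\<^sup>2 - 1"
  shows "((z/y)\<^sup>2 + (w/y)\<^sup>2 - (1/y)\<^sup>2) / (1/y) = x"
proof -
  have "((z/y)\<^sup>2 + (w/y)\<^sup>2 - (1/y)\<^sup>2) / (1/y) = (z\<^sup>2 + w\<^sup>2 - 1) / y"
    using assms(1) by (simp add: power_divide diff_divide_distrib add_divide_distrib power2_eq_square)
      (simp add: field_simps)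
  also have "\<dots> = x" unfolding assms(2)[symmetric] using assms(1) by simp
  finally show ?thesis .
qed

lemma acc_inv:
  assumes "Lf v v = -1"
  shows "valid_oc (inv_acc v) \<and> acc_coords (inv_acc v) = v"
proof (cases "v$2 = 0")
  case True
  then have "(v$3)\<^sup>2 + (v$4)\<^sup>2 = 1" using assms unfolding Lf_def by (simp add: power2_eq_square)
  then have "cmod (Complex (v$3) (v$4)) = 1" by (simp add: cmod_def)
  moreover have "acc_coords (OLine (Complex (v$3) (v$4)) (v$1/2)) = v"
    using True by (simp add: vec_eq_iff forall_4)
  ultimately show ?thesis using True unfolding inv_acc_def by simp
next
  case False
  have e: "v$1 * v$2 = (v$3)\<^sup>2 + (v$4)\<^sup>2 - 1" using assms unfolding Lf_def by (simp add: power2_eq_square)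
  have "acc_coords (OCirc (Complex (v$3/v$2) (v$4/v$2)) (1/v$2)) = v"
    using False acc_inv_aux[OF False e] by (simp add: vec_eq_iff forall_4)
  then show ?thesis using False unfolding inv_acc_def by simp
qed

lemma nvec_ptof:
  assumes "Lf m m = 0" "m \<noteq> 0"
  shows "\<exists>k. k \<noteq> 0 \<and> m = k *\<^sub>R nvec (ptof m)"
proof (cases "m$2 = 0")
  case True
  then have "- (m$3 * m$3) = m$4 * m$4" using assms unfolding Lf_def by simp
  then have "m$3 * m$3 + m$4 * m$4 = 0" by linarith
  then have z: "m$3 = 0" "m$4 = 0" by (simp_all add: sum_squares_eq_zero_iff)
  then have "m$1 \<noteq> 0" using True assms(2) vec4_nz by blast
  then show ?thesis using True z
    by (intro exI[of _ "m$1"]) (simp add: ptof_def vec_eq_iff forall_4)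
next
  case False
  have e: "m$1 * m$2 = (m$3)\<^sup>2 + (m$4)\<^sup>2" using assms unfolding Lf_def by (simp add: power2_eq_square)
  have e2: "m$1 = ((m$3)\<^sup>2 + (m$4)\<^sup>2) / m$2" using e False by (simp add: eq_divide_eq)
  have e3: "m$2 * ((m $ 3 / m $ 2)\<^sup>2 + (m $ 4 / m $ 2)\<^sup>2) = ((m$3)\<^sup>2 + (m$4)\<^sup>2) / m$2"
    using False by (simp add: field_simps power2_eq_square)
  have "m$1 = m$2 * ((m $ 3 / m $ 2)\<^sup>2 + (m $ 4 / m $ 2)\<^sup>2)"
    using e2 e3 by simp
  then show ?thesis using False
    by (intro exI[of _ "m$2"]) (simp add: ptof_def vec_eq_iff forall_4)
qed

lemma nvec_orth:
  assumes "Lf (nvec P) (nvec Q) = 0"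
  shows "P = Q"
proof (cases P)
  case None
  then show ?thesis using assms by (cases Q) (auto simp: Lf_def)
next
  case (Some p)
  show ?thesis
  proof (cases Q)
    case None
    then show ?thesis using assms Some by (auto simp: Lf_def)
  next
    case (Some q)
    have "(Re p - Re q)\<^sup>2 + (Im p - Im q)\<^sup>2 = 0"
      using assms \<open>P = Some p\<close> Some unfolding Lf_def by (simp add: power2_eq_square algebra_simps)
    then have "Re p = Re q" "Im p = Im q" by (simp_all add: sum_power2_eq_zero_iff)
    then show ?thesis using Some \<open>P = Some p\<close> by (simp add: complex_eqI)
  qed
qed

lemma null_orth:
  assumes "Lf m m = 0" "m \<noteq> 0" "Lf (nvec P) m = 0"
  shows "ptof m = P"
proof -
  obtain k where k: "k \<noteq> 0" "m = k *\<^sub>R nvec (ptof m)" using nvec_ptof assms by blast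
  have "Lf (nvec P) (nvec (ptof m)) = 0" using assms(3) k
    by (metis Lf_scale_right mult_eq_0_iff)
  then show ?thesis using nvec_orth by metis
qed

lemma tangent_L:
  assumes "valid_oc A" "valid_oc B" "Lf (acc_coords A) (acc_coords B) = 1"
    "acc_coords A + acc_coords B \<noteq> 0"
  shows "tangent_oc A B \<and> tangency_point A B = ptof (acc_coords A + acc_coords B)"
proof -
  define a where "a = acc_coords A"
  define b where "b = acc_coords B"
  define n where "n = a + b"
  have aa: "Lf a a = -1" "Lf b b = -1" using Lf_self assms a_def b_def by auto
  have ab: "Lf a b = 1" "Lf b a = 1" using assms Lf_sym a_def b_def by metis+
  have nn: "Lf n n = 0" unfolding n_def using aa ab by (simp add: Lf_lin)
  have an: "Lf a n = 0" "Lf b n = 0" unfolding n_def using aa ab by (simp_all add: Lf_lin)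
  have nz: "n \<noteq> 0" using assms(4) a_def b_def n_def by simp
  obtain k where k: "k \<noteq> 0" "n = k *\<^sub>R nvec (ptof n)" using nvec_ptof nn nz by blast
  have "Lf a (nvec (ptof n)) = 0" "Lf b (nvec (ptof n)) = 0" using an k
    by (metis Lf_scale_right mult_eq_0_iff)+
  then have mem: "ptof n \<in> ext_pts A \<inter> ext_pts B" using incidence assms a_def b_def by auto
  have uni: "P = ptof n" if "P \<in> ext_pts A \<inter> ext_pts B" for P
  proof -
    have "Lf a (nvec P) = 0" "Lf b (nvec P) = 0" using that incidence assms a_def b_def by auto
    then have "Lf (nvec P) n = 0" unfolding n_def by (simp add: Lf_lin Lf_sym)
    then show ?thesis using null_orth nn nz by metis
  qed
  have "tangent_oc A B" unfolding tangent_oc_def using mem uni by blast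
  moreover have "tangency_point A B = ptof n" unfolding tangency_point_def
    using mem uni by blast
  ultimately show ?thesis using n_def a_def b_def by simp
qed

lemma orth:
  assumes "valid_oc A" "valid_oc B" "Lf (acc_coords A) (acc_coords B) = 0"
  shows "orthogonal_oc A B"
proof (cases A)
  case (OCirc c1 r1)
  show ?thesis
  proof (cases B)
    case (OCirc c2 r2)
    then show ?thesis using assms \<open>A = _\<close> Lf_CC[of r1 r2 c1 c2] by (simp add: divide_eq_0_iff)
  next
    case (OLine h m)
    then show ?thesis using assms \<open>A = _\<close> Lf_CL[of r1 c1 h m] by simp
  qed
next
  case (OLine h m)
  show ?thesis
  proof (cases B)
    case (OCirc c2 r2)
    then show ?thesis using assms \<open>A = _\<close> Lf_LC[of r2 h m c2] by simp
  next
    case (OLine k n)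
    then show ?thesis using assms \<open>A = _\<close> Lf_LL[of h m k n] by simp
  qed
qed




lemma cc_two_pts:
  fixes x y a1 a2 r1 r2 :: real
  assumes h1: "x\<^sup>2 + y\<^sup>2 = r1\<^sup>2" and h2: "(x - a1)\<^sup>2 + (y - a2)\<^sup>2 = r2\<^sup>2"
    and nd: "(a1\<^sup>2 + a2\<^sup>2 - r1\<^sup>2 - r2\<^sup>2)\<^sup>2 \<noteq> 4 * r1\<^sup>2 * r2\<^sup>2"
  shows "\<exists>x' y'. (x' \<noteq> x \<or> y' \<noteq> y) \<and> x'\<^sup>2 + y'\<^sup>2 = r1\<^sup>2 \<and> (x' - a1)\<^sup>2 + (y' - a2)\<^sup>2 = r2\<^sup>2"
proof -
  have id: "(a1\<^sup>2 + a2\<^sup>2 - r1\<^sup>2 - r2\<^sup>2)\<^sup>2 - 4 * r1\<^sup>2 * r2\<^sup>2 = -4 * (x*a2 - y*a1)\<^sup>2"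
    unfolding h1[symmetric] h2[symmetric] by algebra
  have cr: "x*a2 - y*a1 \<noteq> 0" using id nd by auto
  define V where "V = a1\<^sup>2 + a2\<^sup>2"
  have V: "V \<noteq> 0" using cr unfolding V_def by (auto simp: sum_power2_eq_zero_iff)
  define k where "k = (x*a1 + y*a2) / V"
  have kV: "k * V = x*a1 + y*a2" unfolding k_def using V by simp
  have e1: "(2*k*a1 - x)\<^sup>2 + (2*k*a2 - y)\<^sup>2 = x\<^sup>2 + y\<^sup>2 + 4*k*(k*V - (x*a1 + y*a2))"
    unfolding V_def by algebra
  have e2: "(2*k*a1 - x - a1)\<^sup>2 + (2*k*a2 - y - a2)\<^sup>2 = (x - a1)\<^sup>2 + (y - a2)\<^sup>2
      + 4*(k - 1)*(k*V - (x*a1 + y*a2))"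
    unfolding V_def by algebra
  have ne: "2*k*a1 - x \<noteq> x \<or> 2*k*a2 - y \<noteq> y"
  proof (rule ccontr)
    assume "\<not> ?thesis"
    then have "x = k*a1" "y = k*a2" by auto
    then have "x*a2 - y*a1 = 0" by simp
    then show False using cr by simp
  qed
  show ?thesis
    by (rule exI[of _ "2*k*a1 - x"], rule exI[of _ "2*k*a2 - y"])
       (use ne e1 e2 kV h1 h2 in simp)
qed

lemma cl_two_pts:
  fixes x y h1 h2 e r :: real
  assumes hh: "h1\<^sup>2 + h2\<^sup>2 = 1" and c: "x\<^sup>2 + y\<^sup>2 = r\<^sup>2" and l: "x*h1 + y*h2 = e"
    and nd: "e\<^sup>2 \<noteq> r\<^sup>2"
  shows "\<exists>x' y'. (x' \<noteq> x \<or> y' \<noteq> y) \<and> x'\<^sup>2 + y'\<^sup>2 = r\<^sup>2 \<and> x'*h1 + y'*h2 = e"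
proof -
  have e1: "(2*e*h1 - x)\<^sup>2 + (2*e*h2 - y)\<^sup>2 = 4*e\<^sup>2*(h1\<^sup>2+h2\<^sup>2) - 4*e*(x*h1+y*h2) + (x\<^sup>2+y\<^sup>2)"
    by algebra
  have e2: "(2*e*h1 - x)*h1 + (2*e*h2 - y)*h2 = 2*e*(h1\<^sup>2+h2\<^sup>2) - (x*h1+y*h2)"
    by algebra
  have ne: "2*e*h1 - x \<noteq> x \<or> 2*e*h2 - y \<noteq> y"
  proof (rule ccontr)
    assume "\<not> ?thesis"
    then have "x = e*h1" "y = e*h2" by auto
    then have "x\<^sup>2 + y\<^sup>2 = e\<^sup>2 * (h1\<^sup>2+h2\<^sup>2)" by algebra
    then show False using hh c nd by simp
  qed
  show ?thesis
    by (rule exI[of _ "2*e*h1 - x"], rule exI[of _ "2*e*h2 - y"])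
       (use ne e1 e2 hh c l in \<open>simp add: power2_eq_square\<close>)
qed

lemma ll_pt:
  fixes h1 h2 k1 k2 m n :: real
  assumes "h1\<^sup>2 + h2\<^sup>2 = 1" "k1\<^sup>2 + k2\<^sup>2 = 1" "(h1*k1 + h2*k2)\<^sup>2 \<noteq> 1"
  shows "\<exists>x y. x*h1 + y*h2 = m \<and> x*k1 + y*k2 = n"
proof -
  have id: "(h1*k1 + h2*k2)\<^sup>2 + (h1*k2 - h2*k1)\<^sup>2 = (h1\<^sup>2 + h2\<^sup>2)*(k1\<^sup>2 + k2\<^sup>2)" by algebra
  define dt where "dt = h1*k2 - h2*k1"
  have dt: "dt \<noteq> 0" using id assms unfolding dt_def by auto
  have a0: "(m*k2 - n*h2)*h1 + (h1*n - k1*m)*h2 = m*dt" unfolding dt_def by algebra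
  have b0: "(m*k2 - n*h2)*k1 + (h1*n - k1*m)*k2 = n*dt" unfolding dt_def by algebra
  have a: "((m*k2 - n*h2)/dt)*h1 + ((h1*n - k1*m)/dt)*h2 = m"
  proof -
    have "((m*k2 - n*h2)/dt)*h1 + ((h1*n - k1*m)/dt)*h2 = ((m*k2 - n*h2)*h1 + (h1*n - k1*m)*h2)/dt"
      by (simp add: add_divide_distrib)
    then show ?thesis using a0 dt by simp
  qed
  have b: "((m*k2 - n*h2)/dt)*k1 + ((h1*n - k1*m)/dt)*k2 = n"
  proof -
    have "((m*k2 - n*h2)/dt)*k1 + ((h1*n - k1*m)/dt)*k2 = ((m*k2 - n*h2)*k1 + (h1*n - k1*m)*k2)/dt"
      by (simp add: add_divide_distrib)
    then show ?thesis using b0 dt by simp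
  qed
  show ?thesis using a b by blast
qed

lemma mem_circ: "Some q \<in> ext_pts (OCirc c r) \<longleftrightarrow> (Re q - Re c)\<^sup>2 + (Im q - Im c)\<^sup>2 = r\<^sup>2"
proof -
  have "Some q \<in> ext_pts (OCirc c r) \<longleftrightarrow> dist c q = \<bar>r\<bar>" by auto
  also have "\<dots> \<longleftrightarrow> (dist c q)\<^sup>2 = r\<^sup>2"
    by (metis abs_of_nonneg power2_abs power2_eq_iff_nonneg abs_ge_zero zero_le_dist)
  also have "\<dots> \<longleftrightarrow> (Re q - Re c)\<^sup>2 + (Im q - Im c)\<^sup>2 = r\<^sup>2"
    unfolding dist_sq by (simp add: power2_commute)
  finally show ?thesis .
qed

lemma none_circ: "None \<notin> ext_pts (OCirc c r)" by auto
lemma mem_line: "Some q \<in> ext_pts (OLine h m) \<longleftrightarrow> Re q * Re h + Im q * Im h = m"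
  by (auto simp: dotc_def)
lemma none_line: "None \<in> ext_pts (OLine h m)" by auto
lemma unit_sq: "cmod h = 1 \<Longrightarrow> (Re h)\<^sup>2 + (Im h)\<^sup>2 = 1"
  by (metis cmod_sq power_one)

lemma tangent_sym: "tangent_oc A B = tangent_oc B A"
  unfolding tangent_oc_def by (simp add: Int_commute)

lemma tangentE:
  assumes "tangent_oc A B"
  obtains P where "P \<in> ext_pts A" "P \<in> ext_pts B"
    "\<And>Q. Q \<in> ext_pts A \<Longrightarrow> Q \<in> ext_pts B \<Longrightarrow> Q = P"
  using assms unfolding tangent_oc_def by blast

lemma tangent_sq_CC:
  assumes r: "r1 \<noteq> 0" "r2 \<noteq> 0" and t: "tangent_oc (OCirc c1 r1) (OCirc c2 r2)"
  shows "(Lf (acc_coords (OCirc c1 r1)) (acc_coords (OCirc c2 r2)))\<^sup>2 = 1"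
proof -
  obtain P where P: "P \<in> ext_pts (OCirc c1 r1)" "P \<in> ext_pts (OCirc c2 r2)"
    and u: "\<And>Q. Q \<in> ext_pts (OCirc c1 r1) \<Longrightarrow> Q \<in> ext_pts (OCirc c2 r2) \<Longrightarrow> Q = P"
    using tangentE[OF t] by metis
  obtain p where p: "P = Some p" using P none_circ by (cases P) auto
  define x where "x = Re p - Re c1"
  define y where "y = Im p - Im c1"
  define a1 where "a1 = Re c2 - Re c1"
  define a2 where "a2 = Im c2 - Im c1"
  have h1: "x\<^sup>2 + y\<^sup>2 = r1\<^sup>2" using P(1) p mem_circ x_def y_def by simp
  have h2: "(x - a1)\<^sup>2 + (y - a2)\<^sup>2 = r2\<^sup>2" using P(2) p mem_circ x_def y_def a1_def a2_def
    by simp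
  have D: "(a1\<^sup>2 + a2\<^sup>2 - r1\<^sup>2 - r2\<^sup>2)\<^sup>2 = 4 * r1\<^sup>2 * r2\<^sup>2"
  proof (rule ccontr)
    assume "\<not> ?thesis"
    then obtain x' y' where xy: "x' \<noteq> x \<or> y' \<noteq> y" "x'\<^sup>2 + y'\<^sup>2 = r1\<^sup>2"
      "(x' - a1)\<^sup>2 + (y' - a2)\<^sup>2 = r2\<^sup>2" using cc_two_pts[OF h1 h2] by blast
    define q where "q = Complex (Re c1 + x') (Im c1 + y')"
    have "Some q \<in> ext_pts (OCirc c1 r1)" using xy unfolding mem_circ q_def by simp
    moreover have "Some q \<in> ext_pts (OCirc c2 r2)" using xy unfolding mem_circ q_def a1_def a2_def
      by (simp add: algebra_simps)
    ultimately have "Some q = P" using u by blast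
    then have "q = p" using p by simp
    then show False using xy unfolding q_def x_def y_def by auto
  qed
  have cm: "(cmod (c1 - c2))\<^sup>2 = a1\<^sup>2 + a2\<^sup>2" unfolding cmod_sq a1_def a2_def
    by (simp add: power2_commute)
  have "(Lf (acc_coords (OCirc c1 r1)) (acc_coords (OCirc c2 r2)))\<^sup>2 =
      (a1\<^sup>2 + a2\<^sup>2 - r1\<^sup>2 - r2\<^sup>2)\<^sup>2 / (2*r1*r2)\<^sup>2"
    unfolding Lf_CC[OF r] cm by (simp add: power_divide)
  also have "\<dots> = 1" unfolding D using r by (simp add: power_mult_distrib)
  finally show ?thesis .
qed

lemma tangent_sq_CL:
  assumes r: "r \<noteq> 0" and hh: "cmod h = 1" and t: "tangent_oc (OCirc c r) (OLine h m)"
  shows "(Lf (acc_coords (OCirc c r)) (acc_coords (OLine h m)))\<^sup>2 = 1"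
proof -
  obtain P where P: "P \<in> ext_pts (OCirc c r)" "P \<in> ext_pts (OLine h m)"
    and u: "\<And>Q. Q \<in> ext_pts (OCirc c r) \<Longrightarrow> Q \<in> ext_pts (OLine h m) \<Longrightarrow> Q = P"
    using tangentE[OF t] by metis
  obtain p where p: "P = Some p" using P none_circ by (cases P) auto
  define x where "x = Re p - Re c"
  define y where "y = Im p - Im c"
  define e where "e = m - dotc c h"
  have h1: "x\<^sup>2 + y\<^sup>2 = r\<^sup>2" using P(1) p mem_circ x_def y_def by simp
  have "Re p * Re h + Im p * Im h = m" using P(2) p mem_line by blast
  then have h2: "x * Re h + y * Im h = e" unfolding x_def y_def e_def dotc_def
    by (simp add: left_diff_distrib)
  have hs: "(Re h)\<^sup>2 + (Im h)\<^sup>2 = 1" using unit_sq hh by blast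
  have D: "e\<^sup>2 = r\<^sup>2"
  proof (rule ccontr)
    assume "\<not> ?thesis"
    then obtain x' y' where xy: "x' \<noteq> x \<or> y' \<noteq> y" "x'\<^sup>2 + y'\<^sup>2 = r\<^sup>2"
      "x' * Re h + y' * Im h = e" using cl_two_pts[OF hs h1 h2] by blast
    define q where "q = Complex (Re c + x') (Im c + y')"
    have "Some q \<in> ext_pts (OCirc c r)" using xy unfolding mem_circ q_def by simp
    moreover have "Some q \<in> ext_pts (OLine h m)" using xy unfolding mem_line q_def e_def dotc_def
      by (simp add: algebra_simps)
    ultimately have "Some q = P" using u by blast
    then have "q = p" using p by simp
    then show False using xy unfolding q_def x_def y_def by auto
  qed
  show ?thesis unfolding Lf_CL[OF r] e_def[symmetric] using D r by (simp add: power_divide)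
qed

lemma tangent_sq_LL:
  assumes hh: "cmod h = 1" "cmod k = 1" and t: "tangent_oc (OLine h m) (OLine k n)"
  shows "(Lf (acc_coords (OLine h m)) (acc_coords (OLine k n)))\<^sup>2 = 1"
proof -
  have hs: "(Re h)\<^sup>2 + (Im h)\<^sup>2 = 1" "(Re k)\<^sup>2 + (Im k)\<^sup>2 = 1" using unit_sq hh by blast+
  have "(Re h * Re k + Im h * Im k)\<^sup>2 = 1"
  proof (rule ccontr)
    assume "\<not> ?thesis"
    then obtain x y where xy: "x * Re h + y * Im h = m" "x * Re k + y * Im k = n"
      using ll_pt[OF hs] by blast
    have "Some (Complex x y) \<in> ext_pts (OLine h m)" "Some (Complex x y) \<in> ext_pts (OLine k n)"
      using xy unfolding mem_line by simp_all
    moreover have "None \<in> ext_pts (OLine h m)" "None \<in> ext_pts (OLine k n)" by auto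
    ultimately show False using t unfolding tangent_oc_def by blast
  qed
  then show ?thesis unfolding Lf_LL power2_minus dotc_def .
qed

lemma tangent_sq:
  assumes "valid_oc A" "valid_oc B" "tangent_oc A B"
  shows "(Lf (acc_coords A) (acc_coords B))\<^sup>2 = 1"
proof (cases A)
  case (OCirc c1 r1)
  show ?thesis
  proof (cases B)
    case (OCirc c2 r2)
    then show ?thesis using assms OCirc tangent_sq_CC by (metis valid_oc.simps(1) \<open>A = _\<close>)
  next
    case (OLine h m)
    then show ?thesis using assms tangent_sq_CL \<open>A = _\<close> by (metis valid_oc.simps)
  qed
next
  case (OLine h m)
  show ?thesis
  proof (cases B)
    case (OCirc c2 r2)
    then show ?thesis using assms tangent_sq_CL \<open>A = _\<close> tangent_sym Lf_sym by (metis valid_oc.simps)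
  next
    case (OLine k n)
    then show ?thesis using assms tangent_sq_LL \<open>A = _\<close> by (metis valid_oc.simps)
  qed
qed




lemma dotc_add_scale: "dotc (c + complex_of_real t * h) k = dotc c k + t * dotc h k"
  by (simp add: dotc_def algebra_simps)

lemma dotc_scale: "dotc (complex_of_real t * h) k = t * dotc h k"
  by (simp add: dotc_def algebra_simps)

lemma dotc_self: "dotc h h = (cmod h)\<^sup>2"
  unfolding dotc_def cmod_sq by (simp add: power2_eq_square)

lemma dotc_diff: "dotc (x - c) h = dotc x h - dotc c h"
  by (simp add: dotc_def algebra_simps)

lemma dotc_le: "dotc u h \<le> cmod u * cmod h"
proof -
  have "dotc u h = Re (u * cnj h)" by (simp add: dotc_def)
  also have "\<dots> \<le> cmod (u * cnj h)" by (rule complex_Re_le_cmod)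
  also have "\<dots> = cmod u * cmod h" by (simp add: norm_mult)
  finally show ?thesis .
qed

lemma sq_abs: "(d::real) \<ge> 0 \<Longrightarrow> d\<^sup>2 = t\<^sup>2 \<Longrightarrow> d = \<bar>t\<bar>"
  by (metis abs_of_nonneg power2_abs power2_eq_iff_nonneg abs_ge_zero)

lemma int_C: "interior_oc (OCirc c r) = (if r > 0 then {x. dist c x < r} else {x. dist x c > \<bar>r\<bar>})"
  by (auto simp: ball_def)

lemma far_CC:
  assumes "r1 < 0" "r2 < 0"
  shows "interior_oc (OCirc c1 r1) \<inter> interior_oc (OCirc c2 r2) \<noteq> {}"
proof -
  define R where "R = - r1 - r2 + dist c1 c2 + 1"
  define x where "x = c1 + complex_of_real R"
  have R0: "R > 0" using assms unfolding R_def by (simp add: add_pos_nonneg)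
  have d1: "dist x c1 = R" unfolding x_def dist_norm using R0 by simp
  have "dist x c1 \<le> dist x c2 + dist c2 c1" by (rule dist_triangle)
  then have "dist x c2 \<ge> R - dist c1 c2" using d1 by (simp add: dist_commute)
  then have "x \<in> interior_oc (OCirc c2 r2)" using assms unfolding int_C R_def by auto
  moreover have "dist x c1 > \<bar>r1\<bar>" unfolding d1 R_def
    using assms zero_le_dist[of c1 c2] abs_of_neg[of r1] by linarith
  then have "x \<in> interior_oc (OCirc c1 r1)" using assms unfolding int_C by auto
  ultimately show ?thesis by blast
qed

lemma neg_inter_CC:
  assumes r: "r1 \<noteq> 0" "r2 \<noteq> 0"
    and L: "Lf (acc_coords (OCirc c1 r1)) (acc_coords (OCirc c2 r2)) = -1"
  shows "interior_oc (OCirc c1 r1) \<inter> interior_oc (OCirc c2 r2) \<noteq> {}"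
proof -
  define d where "d = dist c1 c2"
  have "((cmod (c1 - c2))\<^sup>2 - r1\<^sup>2 - r2\<^sup>2) / (2*r1*r2) = -1" using L Lf_CC[OF r] by simp
  then have "(cmod (c1 - c2))\<^sup>2 - r1\<^sup>2 - r2\<^sup>2 = - (2*r1*r2)" using r by (simp add: divide_eq_eq)
  then have "d\<^sup>2 = (r1 - r2)\<^sup>2" unfolding d_def dist_norm by (simp add: power2_diff)
  then have d: "d = \<bar>r1 - r2\<bar>" using sq_abs[of d] unfolding d_def by simp
  have dd: "dist c2 c1 = d" unfolding d_def by (simp add: dist_commute)
  show ?thesis
  proof (cases "r1 > 0")
    case True
    show ?thesis
    proof (cases "r2 > 0")
      case True2: True
      show ?thesis
      proof (cases "r1 \<le> r2")
        case True
        then have "c1 \<in> interior_oc (OCirc c1 r1) \<inter> interior_oc (OCirc c2 r2)"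
          using True2 \<open>r1 > 0\<close> d dd unfolding int_C by auto
        then show ?thesis by blast
      next
        case False
        then have "c2 \<in> interior_oc (OCirc c1 r1) \<inter> interior_oc (OCirc c2 r2)"
          using True2 \<open>r1 > 0\<close> d dd unfolding int_C d_def by auto
        then show ?thesis by blast
      qed
    next
      case False
      then have "r2 < 0" using r by simp
      then have "c1 \<in> interior_oc (OCirc c1 r1) \<inter> interior_oc (OCirc c2 r2)"
        using \<open>r1 > 0\<close> d dd unfolding int_C d_def by auto
      then show ?thesis by blast
    qed
  next
    case False
    then have r1n: "r1 < 0" using r by simp
    show ?thesis
    proof (cases "r2 > 0")
      case True
      then have "c2 \<in> interior_oc (OCirc c1 r1) \<inter> interior_oc (OCirc c2 r2)"
        using r1n d dd unfolding int_C d_def by auto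
      then show ?thesis by blast
    next
      case False
      then show ?thesis using far_CC r1n r by (simp add: not_less less_le)
    qed
  qed
qed

lemma mixed_CC:
  assumes r: "r1 > 0" "r2 < 0" and d: "dist c1 c2 = \<bar>r1 + r2\<bar>" and s: "r1 + r2 \<noteq> 0"
  shows "interior_oc (OCirc c1 r1) \<inter> interior_oc (OCirc c2 r2) = {} \<longleftrightarrow> r1 + r2 < 0"
proof (cases "r1 + r2 < 0")
  case True
  have "False" if x1: "dist c1 x < r1" and x2: "dist x c2 > - r2" for x
  proof -
    have "dist x c2 \<le> dist x c1 + dist c1 c2" by (rule dist_triangle)
    then show False using x1 x2 d True by (simp add: dist_commute)
  qed
  then show ?thesis using True r unfolding int_C by auto
next
  case False
  then have pos: "r1 + r2 > 0" using s by simp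
  define dd where "dd = r1 + r2"
  have dpos: "dd > 0" using pos dd_def by simp
  have cm: "cmod (c2 - c1) = dd" using d pos dd_def by (simp add: dist_norm norm_minus_commute)
  define x where "x = c1 + complex_of_real (r2/dd) * (c2 - c1)"
  have xc1: "x - c1 = complex_of_real (r2/dd) * (c2 - c1)" unfolding x_def by simp
  have "dist c1 x = cmod (x - c1)" by (simp add: dist_norm norm_minus_commute)
  also have "\<dots> = \<bar>r2/dd\<bar> * dd" unfolding xc1 by (simp only: norm_mult norm_of_real cm)
  also have "\<dots> = - r2" using dpos r by (simp add: abs_of_neg)
  finally have x1: "dist c1 x = - r2" by simp
  have "x - c2 = complex_of_real (r2/dd - 1) * (c2 - c1)" unfolding x_def
    by (simp add: algebra_simps)
  then have "dist x c2 = \<bar>r2/dd - 1\<bar> * dd" unfolding dist_norm by (simp only: norm_mult norm_of_real cm)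
  also have "\<dots> = \<bar>r2 - dd\<bar>" using dpos
    by (metis abs_of_pos diff_divide_eq_iff divide_self_if abs_divide less_irrefl
        nonzero_mult_div_cancel_right times_divide_eq_left)
  also have "\<dots> = r1" using r unfolding dd_def by simp
  finally have x2: "dist x c2 = r1" .
  have "x \<in> interior_oc (OCirc c1 r1) \<inter> interior_oc (OCirc c2 r2)"
    using x1 x2 r pos unfolding int_C by auto
  then show ?thesis using False by blast
qed

lemma disj_CC:
  assumes r: "r1 \<noteq> 0" "r2 \<noteq> 0"
    and L: "Lf (acc_coords (OCirc c1 r1)) (acc_coords (OCirc c2 r2)) = 1"
    and nz: "acc_coords (OCirc c1 r1) + acc_coords (OCirc c2 r2) \<noteq> 0"
  shows "interior_oc (OCirc c1 r1) \<inter> interior_oc (OCirc c2 r2) = {} \<longleftrightarrow>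
    fut (acc_coords (OCirc c1 r1) + acc_coords (OCirc c2 r2))"
proof -
  define d where "d = dist c1 c2"
  have "((cmod (c1 - c2))\<^sup>2 - r1\<^sup>2 - r2\<^sup>2) / (2*r1*r2) = 1" using L by (simp only: Lf_CC[OF r])
  then have "(cmod (c1 - c2))\<^sup>2 - r1\<^sup>2 - r2\<^sup>2 = 2*r1*r2" using r by (simp add: divide_eq_eq)
  then have "d\<^sup>2 = (r1 + r2)\<^sup>2" unfolding d_def dist_norm by (simp add: power2_sum)
  then have d: "d = \<bar>r1 + r2\<bar>" using sq_abs[of d] unfolding d_def by simp
  have s: "r1 + r2 \<noteq> 0"
  proof
    assume s0: "r1 + r2 = 0"
    then have "c1 = c2" using d unfolding d_def by simp
    moreover have "r2 = - r1" using s0 by simp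
    ultimately have "OCirc c2 r2 = reverse_oc (OCirc c1 r1)" by simp
    then show False using nz acc_reverse by (metis add.right_inverse)
  qed
  have f2: "(acc_coords (OCirc c1 r1) + acc_coords (OCirc c2 r2)) $ 2 = (r1 + r2) / (r1 * r2)"
    using r by (simp add: field_simps)
  have futiff: "fut (acc_coords (OCirc c1 r1) + acc_coords (OCirc c2 r2)) \<longleftrightarrow> (r1 + r2) / (r1 * r2) > 0"
    unfolding fut_def f2 using s r by auto
  show ?thesis
  proof (cases "r1 > 0")
    case r1p: True
    show ?thesis
    proof (cases "r2 > 0")
      case True
      have "False" if x1: "dist c1 x < r1" and x2: "dist c2 x < r2" for x
      proof -
        have "dist c1 c2 \<le> dist c1 x + dist x c2" by (rule dist_triangle)
        then show False using x1 x2 d d_def r1p True by (simp add: dist_commute)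
      qed
      then have "interior_oc (OCirc c1 r1) \<inter> interior_oc (OCirc c2 r2) = {}"
        using True r1p unfolding int_C by auto
      moreover have "(r1 + r2) / (r1 * r2) > 0" using True r1p by simp
      ultimately show ?thesis using futiff by simp
    next
      case False
      then have r2n: "r2 < 0" using r by simp
      have "(r1 + r2) / (r1 * r2) > 0 \<longleftrightarrow> r1 + r2 < 0" using r1p r2n mult_pos_neg[OF r1p r2n]
        by (auto simp: zero_less_divide_iff)
      then show ?thesis using mixed_CC[OF r1p r2n] d d_def s futiff by simp
    qed
  next
    case False
    then have r1n: "r1 < 0" using r by simp
    show ?thesis
    proof (cases "r2 > 0")
      case True
      have "(r1 + r2) / (r1 * r2) > 0 \<longleftrightarrow> r2 + r1 < 0" using True r1n mult_neg_pos[OF r1n True]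
        by (auto simp: zero_less_divide_iff)
      moreover have "dist c2 c1 = \<bar>r2 + r1\<bar>" using d d_def by (simp add: dist_commute add.commute)
      ultimately show ?thesis using mixed_CC[OF True r1n, of c2 c1] s futiff
        by (simp add: Int_commute add.commute)
    next
      case False
      then have r2n: "r2 < 0" using r by simp
      have "\<not> (r1 + r2) / (r1 * r2) > 0" using r1n r2n mult_neg_neg[OF r1n r2n]
        by (auto simp: zero_less_divide_iff)
      then show ?thesis using far_CC[OF r1n r2n] futiff by simp
    qed
  qed
qed

lemma int_L: "interior_oc (OLine h m) = {x. dotc x h > m}" by simp

lemma dotc_hh: "cmod h = 1 \<Longrightarrow> dotc h h = 1"
  by (simp add: dotc_self)

lemma neg_inter_CL:
  assumes r: "r \<noteq> 0" and hh: "cmod h = 1"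
    and L: "Lf (acc_coords (OCirc c r)) (acc_coords (OLine h m)) = -1"
  shows "interior_oc (OCirc c r) \<inter> interior_oc (OLine h m) \<noteq> {}"
proof -
  have e: "dotc c h = m + r" using L r by (simp only: Lf_CL[OF r]) (simp add: divide_eq_eq)
  show ?thesis
  proof (cases "r > 0")
    case True
    then have "c \<in> interior_oc (OCirc c r) \<inter> interior_oc (OLine h m)" using e unfolding int_C by auto
    then show ?thesis by blast
  next
    case False
    then have rn: "r < 0" using r by simp
    define x where "x = c + complex_of_real (1 - r) * h"
    have "dotc x h = m + 1" unfolding x_def dotc_add_scale dotc_hh[OF hh] e by simp
    moreover have "dist x c = 1 - r"
    proof -
      have "x - c = complex_of_real (1 - r) * h" unfolding x_def by simp
      then have "dist x c = \<bar>1 - r\<bar> * cmod h" unfolding dist_norm by (simp only: norm_mult norm_of_real)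
      then show ?thesis using rn hh by simp
    qed
    ultimately have "x \<in> interior_oc (OCirc c r) \<inter> interior_oc (OLine h m)" using rn unfolding int_C by auto
    then show ?thesis by blast
  qed
qed

lemma disj_CL:
  assumes r: "r \<noteq> 0" and hh: "cmod h = 1"
    and L: "Lf (acc_coords (OCirc c r)) (acc_coords (OLine h m)) = 1"
  shows "interior_oc (OCirc c r) \<inter> interior_oc (OLine h m) = {} \<longleftrightarrow>
    fut (acc_coords (OCirc c r) + acc_coords (OLine h m))"
proof -
  have e: "dotc c h = m - r" using L r by (simp only: Lf_CL[OF r]) (simp add: divide_eq_eq)
  have futiff: "fut (acc_coords (OCirc c r) + acc_coords (OLine h m)) \<longleftrightarrow> r > 0"
    unfolding fut_def using r by auto
  show ?thesis
  proof (cases "r > 0")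
    case True
    have "False" if x1: "dist c x < r" and x2: "dotc x h > m" for x
    proof -
      have "dotc (x - c) h \<le> cmod (x - c) * cmod h" by (rule dotc_le)
      then have "dotc x h - dotc c h \<le> dist c x" unfolding dotc_diff hh
        by (simp add: dist_norm norm_minus_commute)
      then show False using x1 x2 e by simp
    qed
    then have "interior_oc (OCirc c r) \<inter> interior_oc (OLine h m) = {}" using True unfolding int_C by auto
    then show ?thesis using futiff True by simp
  next
    case False
    then have rn: "r < 0" using r by simp
    define x where "x = c + complex_of_real (1 - r) * h"
    have "dotc x h = m - r + 1 - r" unfolding x_def dotc_add_scale dotc_hh[OF hh] e by simp
    moreover have "dist x c = 1 - r"
    proof -
      have "x - c = complex_of_real (1 - r) * h" unfolding x_def by simp
      then have "dist x c = \<bar>1 - r\<bar> * cmod h" unfolding dist_norm by (simp only: norm_mult norm_of_real)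
      then show ?thesis using rn hh by simp
    qed
    ultimately have "x \<in> interior_oc (OCirc c r) \<inter> interior_oc (OLine h m)" using rn unfolding int_C by auto
    then show ?thesis using futiff rn by auto
  qed
qed

lemma neg_inter_LL:
  assumes hh: "cmod h = 1" "cmod k = 1"
    and L: "Lf (acc_coords (OLine h m)) (acc_coords (OLine k n)) = -1"
  shows "interior_oc (OLine h m) \<inter> interior_oc (OLine k n) \<noteq> {}"
proof -
  have e: "dotc h k = 1" using L unfolding Lf_LL by simp
  define t where "t = \<bar>m\<bar> + \<bar>n\<bar> + 1"
  define x where "x = complex_of_real t * h"
  have "dotc x h = t" "dotc x k = t" unfolding x_def dotc_scale dotc_hh[OF hh(1)] e by simp_all
  then have "x \<in> interior_oc (OLine h m) \<inter> interior_oc (OLine k n)" unfolding t_def by auto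
  then show ?thesis by blast
qed

lemma disj_LL:
  assumes hh: "cmod h = 1" "cmod k = 1"
    and L: "Lf (acc_coords (OLine h m)) (acc_coords (OLine k n)) = 1"
    and nz: "acc_coords (OLine h m) + acc_coords (OLine k n) \<noteq> 0"
  shows "interior_oc (OLine h m) \<inter> interior_oc (OLine k n) = {} \<longleftrightarrow>
    fut (acc_coords (OLine h m) + acc_coords (OLine k n))"
proof -
  have e: "dotc h k = -1" using L unfolding Lf_LL by simp
  have "(Re h + Re k)\<^sup>2 + (Im h + Im k)\<^sup>2 = dotc h h + dotc k k + 2 * dotc h k"
    unfolding dotc_def by algebra
  also have "\<dots> = 0" using e dotc_hh hh by simp
  finally have "(Re h + Re k)\<^sup>2 + (Im h + Im k)\<^sup>2 = 0" .
  then have kh: "Re k = - Re h" "Im k = - Im h" by (simp_all add: sum_power2_eq_zero_iff)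
  have mn: "m + n \<noteq> 0"
  proof
    assume "m + n = 0"
    then have "acc_coords (OLine h m) + acc_coords (OLine k n) = 0"
      using kh by (simp add: vec_eq_iff forall_4)
    then show False using nz by simp
  qed
  have futiff: "fut (acc_coords (OLine h m) + acc_coords (OLine k n)) \<longleftrightarrow> m + n > 0"
    unfolding fut_def by auto
  have dk: "dotc x k = - dotc x h" for x unfolding dotc_def kh by simp
  show ?thesis
  proof (cases "m + n > 0")
    case True
    then have "interior_oc (OLine h m) \<inter> interior_oc (OLine k n) = {}" using dk by auto
    then show ?thesis using True futiff by simp
  next
    case False
    then have neg: "m + n < 0" using mn by simp
    define x where "x = complex_of_real ((m - n)/2) * h"
    have "dotc x h = (m - n)/2" unfolding x_def dotc_scale dotc_hh[OF hh(1)] by simp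
    then have "x \<in> interior_oc (OLine h m) \<inter> interior_oc (OLine k n)" using neg dk by auto
    then show ?thesis using futiff neg by auto
  qed
qed




definition gram4 :: "real^4 \<Rightarrow> real^4 \<Rightarrow> real^4 \<Rightarrow> real^4 \<Rightarrow> bool" where
  "gram4 a b c d \<longleftrightarrow> Lf a a = -1 \<and> Lf b b = -1 \<and> Lf c c = -1 \<and> Lf d d = -1 \<and>
     Lf a b = 1 \<and> Lf a c = 1 \<and> Lf a d = 1 \<and> Lf b c = 1 \<and> Lf b d = 1 \<and> Lf c d = 1"

lemma gram4_facts:
  assumes "gram4 a b c d"
  shows "Lf a a = -1" "Lf b b = -1" "Lf c c = -1" "Lf d d = -1"
    "Lf a b = 1" "Lf a c = 1" "Lf a d = 1" "Lf b c = 1" "Lf b d = 1" "Lf c d = 1"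
    "Lf b a = 1" "Lf c a = 1" "Lf d a = 1" "Lf c b = 1" "Lf d b = 1" "Lf d c = 1"
  using assms unfolding gram4_def by (auto simp: Lf_sym)

lemma span4:
  assumes g: "gram4 a b c d"
  shows "\<exists>p q r s. x = p *\<^sub>R a + q *\<^sub>R b + r *\<^sub>R c + s *\<^sub>R d"
proof -
  note G = gram4_facts[OF g]
  have ne: "a \<noteq> b" "a \<noteq> c" "a \<noteq> d" "b \<noteq> c" "b \<noteq> d" "c \<noteq> d"
    using G by (metis one_neq_neg_one)+
  define B where "B = {a, b, c, d}"
  have sumB: "(\<Sum>v\<in>B. u v *\<^sub>R v) = u a *\<^sub>R a + u b *\<^sub>R b + u c *\<^sub>R c + u d *\<^sub>R d" for u
    unfolding B_def using ne by (simp add: add.assoc)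
  have ind: "independent B"
    unfolding independent_explicit
  proof (intro conjI allI impI)
    show "finite B" unfolding B_def by simp
    fix u assume "(\<Sum>v\<in>B. u v *\<^sub>R v) = 0"
    then have z: "u a *\<^sub>R a + u b *\<^sub>R b + u c *\<^sub>R c + u d *\<^sub>R d = 0" using sumB by simp
    have "Lf (u a *\<^sub>R a + u b *\<^sub>R b + u c *\<^sub>R c + u d *\<^sub>R d) a = 0"
         "Lf (u a *\<^sub>R a + u b *\<^sub>R b + u c *\<^sub>R c + u d *\<^sub>R d) b = 0"
         "Lf (u a *\<^sub>R a + u b *\<^sub>R b + u c *\<^sub>R c + u d *\<^sub>R d) c = 0"
         "Lf (u a *\<^sub>R a + u b *\<^sub>R b + u c *\<^sub>R c + u d *\<^sub>R d) d = 0"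
      unfolding z by (simp_all add: Lf_lin)
    then have "- u a + u b + u c + u d = 0" "u a - u b + u c + u d = 0"
      "u a + u b - u c + u d = 0" "u a + u b + u c - u d = 0"
      by (simp_all add: Lf_lin G)
    then have "u a = 0" "u b = 0" "u c = 0" "u d = 0" by linarith+
    then show "\<forall>v\<in>B. u v = 0" unfolding B_def by simp
  qed
  have "card B = 4" unfolding B_def using ne by simp
  then have "dim B = DIM(real^4)" using dim_eq_card_independent[OF ind] by simp
  then have "span B = UNIV" using dim_eq_full by blast
  then have "x \<in> span B" by simp
  then obtain u where "x = (\<Sum>v\<in>B. u v *\<^sub>R v)" using span_finite[of B] unfolding B_def by auto
  then show ?thesis using sumB by blast
qed

lemma neg_inter:
  assumes "valid_oc A" "valid_oc B" "Lf (acc_coords A) (acc_coords B) = -1"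
  shows "interior_oc A \<inter> interior_oc B \<noteq> {}"
proof (cases A)
  case (OCirc c1 r1)
  show ?thesis
  proof (cases B)
    case (OCirc c2 r2)
    then show ?thesis using assms \<open>A = _\<close> neg_inter_CC by (metis valid_oc.simps(1))
  next
    case (OLine h m)
    then show ?thesis using assms \<open>A = _\<close> neg_inter_CL by (metis valid_oc.simps)
  qed
next
  case (OLine h m)
  show ?thesis
  proof (cases B)
    case (OCirc c2 r2)
    then show ?thesis using assms \<open>A = _\<close> neg_inter_CL Lf_sym Int_commute by (metis valid_oc.simps)
  next
    case (OLine k n)
    then show ?thesis using assms \<open>A = _\<close> neg_inter_LL by (metis valid_oc.simps)
  qed
qed

lemma disj_iff:
  assumes "valid_oc A" "valid_oc B" "Lf (acc_coords A) (acc_coords B) = 1"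
    "acc_coords A + acc_coords B \<noteq> 0"
  shows "interior_oc A \<inter> interior_oc B = {} \<longleftrightarrow> fut (acc_coords A + acc_coords B)"
proof (cases A)
  case (OCirc c1 r1)
  show ?thesis
  proof (cases B)
    case (OCirc c2 r2)
    then show ?thesis using assms \<open>A = _\<close> disj_CC by (metis valid_oc.simps(1))
  next
    case (OLine h m)
    then show ?thesis using assms \<open>A = _\<close> disj_CL by (metis valid_oc.simps)
  qed
next
  case (OLine h m)
  show ?thesis
  proof (cases B)
    case (OCirc c2 r2)
    then show ?thesis using assms \<open>A = _\<close> disj_CL Lf_sym Int_commute add.commute
      by (metis valid_oc.simps)
  next
    case (OLine k n)
    then show ?thesis using assms \<open>A = _\<close> disj_LL by (metis valid_oc.simps)
  qed
qed

lemma pairL: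
  assumes "valid_oc A" "valid_oc B" "tangent_oc A B" "interior_oc A \<inter> interior_oc B = {}"
  shows "Lf (acc_coords A) (acc_coords B) = 1"
proof -
  have "(Lf (acc_coords A) (acc_coords B))\<^sup>2 = 1" using tangent_sq assms by blast
  then have "Lf (acc_coords A) (acc_coords B) = 1 \<or> Lf (acc_coords A) (acc_coords B) = -1"
    by (simp add: power2_eq_1_iff)
  then show ?thesis using neg_inter assms by blast
qed

lemma pairL_rev:
  assumes "valid_oc A" "valid_oc B" "tangent_oc A B"
    "interior_oc (reverse_oc A) \<inter> interior_oc (reverse_oc B) = {}"
  shows "Lf (acc_coords A) (acc_coords B) = 1"
proof -
  have "tangent_oc (reverse_oc A) (reverse_oc B)" using assms(3)
    unfolding tangent_oc_def ext_pts_reverse .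
  then have "Lf (acc_coords (reverse_oc A)) (acc_coords (reverse_oc B)) = 1"
    using pairL assms valid_reverse by blast
  then show ?thesis unfolding acc_reverse by (simp add: Lf_lin)
qed

lemma nvec_null: "Lf (nvec P) (nvec P) = 0"
  by (cases P) (simp_all add: Lf_def power2_eq_square field_simps)

lemma nvec_nz: "nvec P \<noteq> 0"
  by (cases P) (auto simp: vec4_nz)

lemma ptof_mem:
  assumes "valid_oc A" "Lf n n = 0" "n \<noteq> 0" "Lf (acc_coords A) n = 0"
  shows "ptof n \<in> ext_pts A"
proof -
  obtain k where k: "k \<noteq> 0" "n = k *\<^sub>R nvec (ptof n)" using nvec_ptof assms by blast
  have "Lf (acc_coords A) (nvec (ptof n)) = 0" using assms(4) k
    by (metis Lf_scale_right mult_eq_0_iff)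
  then show ?thesis using incidence assms(1) by blast
qed

lemma ex_out: "card (A :: 4 set) < 4 \<Longrightarrow> \<exists>x. x \<notin> A"
proof (rule ccontr)
  assume "card A < 4" "\<not> (\<exists>x. x \<notin> A)"
  then have "A = UNIV" by auto
  then show False using \<open>card A < 4\<close> by simp
qed

lemma compl2: "(i::4) \<noteq> j \<Longrightarrow> \<exists>k l. distinct [i, j, k, l]"
proof -
  assume ij: "i \<noteq> j"
  obtain k where k: "k \<notin> {i, j}" using ex_out[of "{i,j}"] ij by (auto simp: card_insert_if)
  obtain l where l: "l \<notin> {i, j, k}" using ex_out[of "{i,j,k}"] ij k by (auto simp: card_insert_if)
  show ?thesis using ij k l by auto
qed

lemma compl3: "distinct [i, j, k::4] \<Longrightarrow> \<exists>l. distinct [i, j, k, l]"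
proof -
  assume d: "distinct [i, j, k::4]"
  obtain l where l: "l \<notin> {i, j, k}" using ex_out[of "{i,j,k}"] d by (auto simp: card_insert_if)
  show ?thesis using d l by auto
qed

lemma univ4: "distinct [i, j, k, l::4] \<Longrightarrow> UNIV = {i, j, k, l}"
proof -
  assume d: "distinct [i, j, k, l::4]"
  have "card {i, j, k, l} = card (UNIV :: 4 set)" using d by (simp add: card_insert_if)
  then show ?thesis by (metis card_subset_eq finite subset_UNIV)
qed

lemma sum4:
  assumes d: "distinct [i, j, k, l::4]"
  shows "(\<Sum>m\<in>UNIV. f m) = f i + f j + f k + f l"
proof -
  have U: "UNIV = {i, j, k, l}" using univ4 d by blast
  show ?thesis unfolding U using d by (simp add: add.assoc)
qed

lemma D_aut: "D_mat \<in> Aut_QD"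
  unfolding Aut_QD_def
  by (simp add: vec_eq_iff forall_4 matrix_matrix_mult_def transpose_def D_mat_def Q_D_def sum_4)




theorem mainTheorem4:
  fixes C :: config
  assumes "oriented_descartes_config C"
  shows "D_mat \<in> Aut_QD \<and>
    (\<exists>Cp :: config. oriented_descartes_config Cp \<and> D_mat ** W_mat C = W_mat Cp \<and>
       (\<forall>i j k. j \<noteq> i \<longrightarrow> k \<noteq> i \<longrightarrow> j \<noteq> k \<longrightarrow>
           tangency_point (C j) (C k) \<in> ext_pts (Cp i)) \<and>
       tangency_points Cp = tangency_points C \<and>
       (\<forall>i j. i \<noteq> j \<longrightarrow> orthogonal_oc (C j) (Cp i) \<and>
           ext_pts (C j) \<inter> ext_pts (Cp i) \<subseteq> tangency_points C))"
proof -
  have dc: "descartes_config C"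
    and ori: "(\<forall>i j. i \<noteq> j \<longrightarrow> interior_oc (C i) \<inter> interior_oc (C j) = {}) \<or>
      (\<forall>i j. i \<noteq> j \<longrightarrow> interior_oc (reverse_oc (C i)) \<inter> interior_oc (reverse_oc (C j)) = {})"
    using assms unfolding oriented_descartes_config_def by (rule conjunct1, rule conjunct2)
  have dc': "(\<forall>i. valid_oc (C i)) \<and>
     (\<forall>i j. i \<noteq> j \<longrightarrow> tangent_oc (C i) (C j)) \<and>
     (\<forall>i j k l. i \<noteq> j \<longrightarrow> k \<noteq> l \<longrightarrow>
        tangency_point (C i) (C j) = tangency_point (C k) (C l) \<longrightarrow> {i, j} = {k, l})"
    using dc unfolding descartes_config_def .
  have val: "\<And>i. valid_oc (C i)" and tan: "\<And>i j. i \<noteq> j \<Longrightarrow> tangent_oc (C i) (C j)"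
    and six: "\<And>i j k l. i \<noteq> j \<Longrightarrow> k \<noteq> l \<Longrightarrow>
        tangency_point (C i) (C j) = tangency_point (C k) (C l) \<Longrightarrow> {i, j} = {k, l}"
    using dc' by metis+
  define w where "w i = acc_coords (C i)" for i
  have G1: "Lf (w i) (w j) = 1" if "i \<noteq> j" for i j
    using ori
  proof
    assume "\<forall>i j. i \<noteq> j \<longrightarrow> interior_oc (C i) \<inter> interior_oc (C j) = {}"
    then show ?thesis using pairL val tan that unfolding w_def by blast
  next
    assume "\<forall>i j. i \<noteq> j \<longrightarrow> interior_oc (reverse_oc (C i)) \<inter> interior_oc (reverse_oc (C j)) = {}"
    then show ?thesis using pairL_rev val tan that unfolding w_def by blast
  qed
  have G0: "Lf (w i) (w i) = -1" for i using Lf_self val unfolding w_def by blast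
  have gram: "gram4 (w i) (w j) (w k) (w l)" if "distinct [i, j, k, l]" for i j k l
    using that G0 G1 unfolding gram4_def by auto
  define S where "S = (\<Sum>m\<in>UNIV. w m)"
  have Ssum: "S = w i + w j + w k + w l" if "distinct [i, j, k, l]" for i j k l
    unfolding S_def using sum4 that by blast
  define w' where "w' i = (1/2) *\<^sub>R S - w i" for i
  have row: "(D_mat ** W_mat C) $ i = w' i" for i
  proof -
    have "(D_mat ** W_mat C) $ i $ c = w' i $ c" for c
    proof -
      have "(D_mat ** W_mat C) $ i $ c = (\<Sum>k\<in>UNIV. (if i = k then -1/2 else 1/2) * w k $ c)"
        by (simp add: matrix_matrix_mult_def D_mat_def W_mat_def w_def)
      also have "\<dots> = (\<Sum>k\<in>UNIV. (1/2) * w k $ c - (if i = k then w k $ c else 0))"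
        by (rule sum.cong) auto
      also have "\<dots> = (1/2) * (\<Sum>k\<in>UNIV. w k $ c) - w i $ c"
        by (simp add: sum_subtractf sum_distrib_left)
      also have "\<dots> = w' i $ c" by (simp add: w'_def S_def)
      finally show ?thesis .
    qed
    then show ?thesis by (simp add: vec_eq_iff)
  qed
  have half: "(1/2) *\<^sub>R S + (1/2) *\<^sub>R S = S"
    by (simp add: scaleR_left_distrib[symmetric])
  have pairsum: "w' i + w' j = w k + w l" if "distinct [i, j, k, l]" for i j k l
  proof -
    have "w' i + w' j = ((1/2) *\<^sub>R S + (1/2) *\<^sub>R S) - w i - w j" unfolding w'_def by simp
    also have "\<dots> = S - w i - w j" by (simp only: half)
    also have "\<dots> = w k + w l" unfolding Ssum[OF that] by (simp add: algebra_simps)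
    finally show ?thesis .
  qed
  have G1': "Lf (w' i) (w' j) = 1" if ij: "i \<noteq> j" for i j
  proof -
    obtain k l where d: "distinct [i, j, k, l]" using compl2 ij by blast
    note G = gram4_facts[OF gram[OF d]]
    show ?thesis unfolding w'_def Ssum[OF d] by (simp add: Lf_lin G)
  qed
  have G0': "Lf (w' i) (w' i) = -1" for i
  proof -
    have "\<exists>j::4. j \<noteq> i" by (rule exI[of _ "if i = 0 then 1 else 0"]) simp
    then obtain j where "j \<noteq> i" by blast
    then obtain k l where d: "distinct [i, j, k, l]" using compl2 by metis
    note G = gram4_facts[OF gram[OF d]]
    show ?thesis unfolding w'_def Ssum[OF d] by (simp add: Lf_lin G)
  qed
  define Cp where "Cp i = inv_acc (w' i)" for i
  have accCp: "acc_coords (Cp i) = w' i" and valCp: "valid_oc (Cp i)" for i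
    using acc_inv[OF G0'] unfolding Cp_def by auto
  have nzC: "w k + w l \<noteq> 0" if kl: "k \<noteq> l" for k l
  proof
    assume z: "w k + w l = 0"
    obtain i j where d: "distinct [k, l, i, j]" using compl2 kl by blast
    note G = gram4_facts[OF gram[OF d]]
    have "Lf (w i) (w k + w l) = 2" by (simp add: Lf_lin G)
    then show False unfolding z by (simp add: Lf_lin)
  qed
  have tpC: "tangency_point (C k) (C l) = ptof (w k + w l)" if "k \<noteq> l" for k l
    using tangent_L[OF val val] G1[OF that] nzC[OF that] unfolding w_def by blast
  have tCp: "tangent_oc (Cp i) (Cp j) \<and> tangency_point (Cp i) (Cp j) = ptof (w' i + w' j)"
    if ij: "i \<noteq> j" for i j
  proof -
    obtain k l where d: "distinct [i, j, k, l]" using compl2 ij by blast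
    have "w' i + w' j \<noteq> 0" using pairsum[OF d] nzC d by simp
    then show ?thesis using tangent_L[OF valCp valCp] G1'[OF ij] unfolding accCp by blast
  qed
  have WCp0: "W_mat Cp = (\<chi> i. w' i)" by (simp add: W_mat_def accCp)
  have WCp: "D_mat ** W_mat C = W_mat Cp"
    unfolding WCp0 by (simp add: vec_eq_iff row)
  have six': "{i, j} = {k, l}"
    if ij: "i \<noteq> j" and kl: "k \<noteq> l"
      and eq: "tangency_point (Cp i) (Cp j) = tangency_point (Cp k) (Cp l)" for i j k l
  proof -
    obtain i2 j2 where d1: "distinct [i, j, i2, j2]" using compl2 ij by blast
    obtain k2 l2 where d2: "distinct [k, l, k2, l2]" using compl2 kl by blast
    have n1: "i2 \<noteq> j2" and n2: "k2 \<noteq> l2" using d1 d2 by auto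
    have "tangency_point (C i2) (C j2) = tangency_point (C k2) (C l2)"
      using eq unfolding tCp[OF ij, THEN conjunct2] tCp[OF kl, THEN conjunct2]
        pairsum[OF d1] pairsum[OF d2] tpC[OF n1] tpC[OF n2] .
    then have e: "{i2, j2} = {k2, l2}" using six n1 n2 by blast
    have u1: "{i, j} = UNIV - {i2, j2}" using univ4[OF d1] d1 by auto
    have u2: "{k, l} = UNIV - {k2, l2}" using univ4[OF d2] d2 by auto
    show ?thesis unfolding u1 u2 e ..
  qed
  have oriCp: "(\<forall>i j. i \<noteq> j \<longrightarrow> interior_oc (Cp i) \<inter> interior_oc (Cp j) = {}) \<or>
      (\<forall>i j. i \<noteq> j \<longrightarrow> interior_oc (reverse_oc (Cp i)) \<inter> interior_oc (reverse_oc (Cp j)) = {})"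
    using ori
  proof
    assume H: "\<forall>i j. i \<noteq> j \<longrightarrow> interior_oc (C i) \<inter> interior_oc (C j) = {}"
    have "interior_oc (Cp i) \<inter> interior_oc (Cp j) = {}" if ij: "i \<noteq> j" for i j
    proof -
      obtain k l where d: "distinct [i, j, k, l]" using compl2 ij by blast
      have kl: "k \<noteq> l" using d by simp
      have nz: "acc_coords (Cp i) + acc_coords (Cp j) \<noteq> 0"
        unfolding accCp pairsum[OF d] using nzC[OF kl] .
      have L: "Lf (acc_coords (Cp i)) (acc_coords (Cp j)) = 1" unfolding accCp using G1'[OF ij] .
      have "interior_oc (Cp i) \<inter> interior_oc (Cp j) = {} \<longleftrightarrow> fut (w k + w l)"
        using disj_iff[OF valCp valCp L nz] unfolding accCp pairsum[OF d] .
      also have "\<dots> \<longleftrightarrow> interior_oc (C k) \<inter> interior_oc (C l) = {}"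
        using disj_iff[OF val val, of k l] G1[OF kl] nzC[OF kl] unfolding w_def by simp
      finally show ?thesis using H kl by blast
    qed
    then show ?thesis by blast
  next
    assume H: "\<forall>i j. i \<noteq> j \<longrightarrow> interior_oc (reverse_oc (C i)) \<inter> interior_oc (reverse_oc (C j)) = {}"
    have "interior_oc (reverse_oc (Cp i)) \<inter> interior_oc (reverse_oc (Cp j)) = {}" if ij: "i \<noteq> j" for i j
    proof -
      obtain k l where d: "distinct [i, j, k, l]" using compl2 ij by blast
      have kl: "k \<noteq> l" using d by simp
      have s1: "acc_coords (reverse_oc (Cp i)) + acc_coords (reverse_oc (Cp j)) = - (w k + w l)"
        unfolding acc_reverse accCp pairsum[OF d, symmetric] by simp
      have s2: "acc_coords (reverse_oc (C k)) + acc_coords (reverse_oc (C l)) = - (w k + w l)"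
        unfolding acc_reverse w_def by simp
      have nz: "- (w k + w l) \<noteq> 0" using nzC[OF kl] neg_equal_0_iff_equal by blast
      have L1: "Lf (acc_coords (reverse_oc (Cp i))) (acc_coords (reverse_oc (Cp j))) = 1"
        unfolding acc_reverse accCp using G1'[OF ij] by (simp add: Lf_lin)
      have L2: "Lf (acc_coords (reverse_oc (C k))) (acc_coords (reverse_oc (C l))) = 1"
        unfolding acc_reverse using G1[OF kl] unfolding w_def by (simp add: Lf_lin)
      have vr: "valid_oc (reverse_oc (Cp m))" "valid_oc (reverse_oc (C m))" for m
        using valCp val valid_reverse by auto
      have "interior_oc (reverse_oc (Cp i)) \<inter> interior_oc (reverse_oc (Cp j)) = {} \<longleftrightarrow> fut (- (w k + w l))"
        using disj_iff[OF vr(1) vr(1) L1] s1 nz by simp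
      also have "\<dots> \<longleftrightarrow> interior_oc (reverse_oc (C k)) \<inter> interior_oc (reverse_oc (C l)) = {}"
        using disj_iff[OF vr(2) vr(2) L2] s2 nz by simp
      finally show ?thesis using H kl by blast
    qed
    then show ?thesis by blast
  qed
  have odcCp: "oriented_descartes_config Cp"
    unfolding oriented_descartes_config_def descartes_config_def
    using valCp tCp six' oriCp by blast
  have inc: "tangency_point (C j) (C k) \<in> ext_pts (Cp i)" if ne: "j \<noteq> i" "k \<noteq> i" "j \<noteq> k" for i j k
  proof -
    have "distinct [i, j, k]" using ne by auto
    then obtain l where d: "distinct [i, j, k, l]" using compl3 by blast
    note G = gram4_facts[OF gram[OF d]]
    have a1: "Lf (acc_coords (Cp i)) (w j + w k) = 0" unfolding accCp w'_def Ssum[OF d]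
      by (simp add: Lf_lin G)
    have a2: "Lf (w j + w k) (w j + w k) = 0" by (simp add: Lf_lin G)
    have "ptof (w j + w k) \<in> ext_pts (Cp i)" using ptof_mem[OF valCp a2 nzC[OF ne(3)] a1] .
    then show ?thesis using tpC[OF ne(3)] by simp
  qed
  have tpeq: "tangency_points Cp = tangency_points C"
  proof
    show "tangency_points Cp \<subseteq> tangency_points C"
    proof
      fix x assume "x \<in> tangency_points Cp"
      then obtain i j where ij: "i \<noteq> j" and x: "x = tangency_point (Cp i) (Cp j)"
        unfolding tangency_points_def by blast
      obtain k l where d: "distinct [i, j, k, l]" using compl2 ij by blast
      have kl: "k \<noteq> l" using d by simp
      have "x = tangency_point (C k) (C l)" using x tCp[OF ij] pairsum[OF d] tpC[OF kl] by simp
      then show "x \<in> tangency_points C" unfolding tangency_points_def using kl by blast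
    qed
    show "tangency_points C \<subseteq> tangency_points Cp"
    proof
      fix x assume "x \<in> tangency_points C"
      then obtain i j where ij: "i \<noteq> j" and x: "x = tangency_point (C i) (C j)"
        unfolding tangency_points_def by blast
      obtain k l where d: "distinct [i, j, k, l]" using compl2 ij by blast
      have d': "distinct [k, l, i, j]" using d by auto
      have kl: "k \<noteq> l" using d by simp
      have "x = tangency_point (Cp k) (Cp l)" using x tCp[OF kl] pairsum[OF d'] tpC[OF ij] by simp
      then show "x \<in> tangency_points Cp" unfolding tangency_points_def using kl by blast
    qed
  qed
  have orthint: "orthogonal_oc (C j) (Cp i) \<and> ext_pts (C j) \<inter> ext_pts (Cp i) \<subseteq> tangency_points C"
    if ij: "i \<noteq> j" for i j
  proof -
    obtain k l where d: "distinct [i, j, k, l]" using compl2 ij by blast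
    note G = gram4_facts[OF gram[OF d]]
    have L0: "Lf (acc_coords (C j)) (acc_coords (Cp i)) = 0" unfolding accCp w'_def Ssum[OF d]
      unfolding w_def[symmetric] by (simp add: Lf_lin G)
    have o: "orthogonal_oc (C j) (Cp i)" using orth[OF val valCp L0] .
    have "P \<in> tangency_points C" if P: "P \<in> ext_pts (C j)" "P \<in> ext_pts (Cp i)" for P
    proof -
      define x where "x = nvec P"
      have x1: "Lf (w j) x = 0" using incidence[OF val] P(1) unfolding x_def w_def by blast
      have x2: "Lf (w' i) x = 0" using incidence[OF valCp] P(2) unfolding x_def accCp by blast
      have x3: "Lf x x = 0" unfolding x_def by (rule nvec_null)
      obtain p q r s where xe: "x = p *\<^sub>R w i + q *\<^sub>R w j + r *\<^sub>R w k + s *\<^sub>R w l"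
        using span4[OF gram[OF d]] by blast
      have e1: "p - q + r + s = 0" using x1 unfolding xe by (simp add: Lf_lin G)
      have "Lf (w' i) x = 2 * p" unfolding xe w'_def Ssum[OF d] by (simp add: Lf_lin G)
      then have e2: "p = 0" using x2 by simp
      have xe': "x = (r + s) *\<^sub>R w j + r *\<^sub>R w k + s *\<^sub>R w l"
      proof -
        have "q = r + s" using e1 e2 by simp
        then show ?thesis unfolding xe e2 by simp
      qed
      have "Lf x x = 4 * r * s" unfolding xe' by (simp add: Lf_lin G algebra_simps)
      then have "r = 0 \<or> s = 0" using x3 by simp
      then show ?thesis
      proof
        assume r0: "r = 0"
        have jl: "j \<noteq> l" using d by simp
        have "Lf (nvec P) (w j + w l) = 0" unfolding x_def[symmetric] xe' r0 by (simp add: Lf_lin G)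
        then have "ptof (w j + w l) = P" using null_orth nzC[OF jl] G by (simp add: Lf_lin)
        then have "P = tangency_point (C j) (C l)" using tpC[OF jl] by simp
        then show ?thesis unfolding tangency_points_def using jl by blast
      next
        assume s0: "s = 0"
        have jk: "j \<noteq> k" using d by simp
        have "Lf (nvec P) (w j + w k) = 0" unfolding x_def[symmetric] xe' s0 by (simp add: Lf_lin G)
        then have "ptof (w j + w k) = P" using null_orth nzC[OF jk] G by (simp add: Lf_lin)
        then have "P = tangency_point (C j) (C k)" using tpC[OF jk] by simp
        then show ?thesis unfolding tangency_points_def using jk by blast
      qed
    qed
    then show ?thesis using o by blast
  qed
  show ?thesis using D_aut odcCp WCp inc tpeq orthint by blast
qed


end
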